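(* Let $\nabla$ be an ES basic fusion operator with representing basic assignment $\Phi\mapsto\succeq_\Phi$. The following are equivalent: (i) $\nabla$ satisfies (ESF-I); (ii) for every society $N$, all $N$-profiles $\Phi,\Phi'$ and every $E\in\mathcal E$ with $|[\![B(E)]\!]|\le 2$, if $B(\nabla(E_j,E))\equiv B(\nabla(E'_j,E))$ for all $j\in N$ then $B(\nabla(\Phi,E))\equiv B(\nabla(\Phi',E))$; (iii) for every society $N$, all $N$-profiles $\Phi,\Phi'$ and all interpretations $w,w'$, if $\succeq_{E_i}\upharpoonright_{\{w,w'\}}=\succeq_{E'_i}\upharpoonright_{\{w,w'\}}$ for all $i\in N$ then $\succeq_\Phi\upharpoonright_{\{w,w'\}}=\succeq_{\Phi'}\upharpoonright_{\{w,w'\}}$.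
   Context: Setting: epistemic space $(\mathcal E,B,\mathcal L_{\mathcal P})$ ($\mathcal E$ nonempty, $B:\mathcal E\to$ propositional formulas over finite $\mathcal P$, image modulo equivalence exactly the consistent formulas; $\mathcal W_{\mathcal P}$ valuations, $[\![\phi]\!]$ models); agents: well-ordered set $\mathcal S$; society: nonempty finite $N\subseteq\mathcal S$; $N$-profile $\Phi:N\to\mathcal E$ with $E_i=\Phi(i)$ (and $E'_i=\Phi'(i)$), identified with $E_i$ if $N=\{i\}$; profiles on $\{i_1<\dots<i_n\}$, $\{j_1<\dots<j_m\}$ equivalent if $n=m$ and entries coincide position-wise. ES basic fusion operator: a map $\nabla(\Phi,E)\in\mathcal E$ with (ESF1) $B(\nabla(\Phi,E))\vdash B(E)$; (ESF2) equivalent profiles and $B(E)\equiv B(E')$ give equivalent $B(\nabla)$; (ESF3) if $B(E)\equiv B(E')\wedge B(E'')$ then $B(\nabla(\Phi,E'))\wedge B(E'')\vdash B(\nabla(\Phi,E))$; (ESF4) if moreover $B(\nabla(\Phi,E'))\wedge B(E'')\nvdash\bot$ then $B(\nabla(\Phi,E))\vdash B(\nabla(\Phi,E'))\wedge B(E'')$. Representing basic assignment: the unique $\Phi\mapsto\succeq_\Phi$ (total preorders on $\mathcal W_{\mathcal P}$, equal on equivalent profiles) with $[\![B(\nabla(\Phi,E))]\!]=\max([\![B(E)]\!],\succeq_\Phi)$, $\max(C,\succeq)=\{c\in C:c\succeq x\ \forall x\in C\}$; $\succeq\upharpoonright_C$ denotes restriction of a preorder to $C$. (ESF-I): for every society $N$,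 all $N$-profiles $\Phi,\Phi'$ and every $E$, if for every $E'$ with $B(E')\vdash B(E)$ we have $B(\nabla(E_j,E'))\equiv B(\nabla(E'_j,E'))$ for all $j\in N$, then $B(\nabla(\Phi,E))\equiv B(\nabla(\Phi',E))$. *)

theory Defs
  imports Main
begin

datatype 'p form = Atom 'p | Bot | Neg "'p form" | And "'p form" "'p form" | Or "'p form" "'p form"

text \<open>Interpretations (valuations) are sets of true variables.\<close>
fun models :: "'p form \<Rightarrow> 'p set set" where
  "models (Atom p) = {w. p \<in> w}"
| "models Bot = {}"
| "models (Neg f) = - models f"
| "models (And f g) = models f \<inter> models g"
| "models (Or f g) = models f \<union> models g"

definition entails :: "'p form \<Rightarrow> 'p form \<Rightarrow> bool" (infix "\<turnstile>\<^sub>P" 50) where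
  "f \<turnstile>\<^sub>P g \<longleftrightarrow> models f \<subseteq> models g"

definition equivf :: "'p form \<Rightarrow> 'p form \<Rightarrow> bool" (infix "\<equiv>\<^sub>P" 50) where
  "f \<equiv>\<^sub>P g \<longleftrightarrow> models f = models g"

definition consistent :: "'p form \<Rightarrow> bool" where
  "consistent f \<longleftrightarrow> \<not> (f \<turnstile>\<^sub>P Bot)"

definition epistemic_space :: "('e \<Rightarrow> 'p form) \<Rightarrow> bool" where
  "epistemic_space B \<longleftrightarrow>
     (\<forall>E. consistent (B E)) \<and> (\<forall>f. consistent f \<longrightarrow> (\<exists>E. B E \<equiv>\<^sub>P f))"

text \<open>A profile is a partial map from agents (a well-ordered type) to epistemic states,
  whose domain (the society) is finite and nonempty.\<close>
definition profile :: "('a \<rightharpoonup> 'e) \<Rightarrow> bool" where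
  "profile \<Phi> \<longleftrightarrow> finite (dom \<Phi>) \<and> dom \<Phi> \<noteq> {}"

definition prof_equiv :: "('a::linorder \<rightharpoonup> 'e) \<Rightarrow> ('a \<rightharpoonup> 'e) \<Rightarrow> bool" where
  "prof_equiv \<Phi> \<Psi> \<longleftrightarrow>
     map (\<lambda>i. the (\<Phi> i)) (sorted_list_of_set (dom \<Phi>)) =
     map (\<lambda>i. the (\<Psi> i)) (sorted_list_of_set (dom \<Psi>))"

definition es_basic_fusion ::
  "('e \<Rightarrow> 'p form) \<Rightarrow> (('a::wellorder \<rightharpoonup> 'e) \<Rightarrow> 'e \<Rightarrow> 'e) \<Rightarrow> bool" where
  "es_basic_fusion B fus \<longleftrightarrow>
     (\<forall>\<Phi> E. profile \<Phi> \<longrightarrow> B (fus \<Phi> E) \<turnstile>\<^sub>P B E) \<and>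
     (\<forall>\<Phi> \<Phi>' E E'. profile \<Phi> \<longrightarrow> profile \<Phi>' \<longrightarrow> prof_equiv \<Phi> \<Phi>' \<longrightarrow> B E \<equiv>\<^sub>P B E' \<longrightarrow>
        B (fus \<Phi> E) \<equiv>\<^sub>P B (fus \<Phi>' E')) \<and>
     (\<forall>\<Phi> E E' E''. profile \<Phi> \<longrightarrow> B E \<equiv>\<^sub>P And (B E') (B E'') \<longrightarrow>
        And (B (fus \<Phi> E')) (B E'') \<turnstile>\<^sub>P B (fus \<Phi> E)) \<and>
     (\<forall>\<Phi> E E' E''. profile \<Phi> \<longrightarrow> B E \<equiv>\<^sub>P And (B E') (B E'') \<longrightarrow>
        \<not> (And (B (fus \<Phi> E')) (B E'') \<turnstile>\<^sub>P Bot) \<longrightarrow>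
        B (fus \<Phi> E) \<turnstile>\<^sub>P And (B (fus \<Phi> E')) (B E''))"

text \<open>Total preorders on the set of all interpretations; (w, w') \<in> r means w \<succeq> w'.\<close>
definition total_preorder :: "'w rel \<Rightarrow> bool" where
  "total_preorder r \<longleftrightarrow> refl r \<and> trans r \<and> total_on UNIV r"

definition maxs :: "'w set \<Rightarrow> 'w rel \<Rightarrow> 'w set" where
  "maxs C r = {c \<in> C. \<forall>x \<in> C. (c, x) \<in> r}"

definition restr :: "'w rel \<Rightarrow> 'w set \<Rightarrow> 'w rel" (infixl "\<upharpoonleft>" 60) where
  "r \<upharpoonleft> C = r \<inter> (C \<times> C)"

definition represents ::
  "('e \<Rightarrow> 'p form) \<Rightarrow> (('a::wellorder \<rightharpoonup> 'e) \<Rightarrow> 'e \<Rightarrow> 'e)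
     \<Rightarrow> (('a \<rightharpoonup> 'e) \<Rightarrow> 'p set rel) \<Rightarrow> bool" where
  "represents B fus R \<longleftrightarrow>
     (\<forall>\<Phi>. profile \<Phi> \<longrightarrow> total_preorder (R \<Phi>)) \<and>
     (\<forall>\<Phi> \<Phi>'. profile \<Phi> \<longrightarrow> profile \<Phi>' \<longrightarrow> prof_equiv \<Phi> \<Phi>' \<longrightarrow> R \<Phi> = R \<Phi>') \<and>
     (\<forall>\<Phi> E. profile \<Phi> \<longrightarrow> models (B (fus \<Phi> E)) = maxs (models (B E)) (R \<Phi>))"

end

theory Submission
  imports Defs
begin

fun big_and :: "'p form list \<Rightarrow> 'p form" where
  "big_and [] = Neg Bot" | "big_and (f # fs) = And f (big_and fs)"
fun big_or :: "'p form list \<Rightarrow> 'p form" where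
  "big_or [] = Bot" | "big_or (f # fs) = Or f (big_or fs)"

lemma models_big_and: "models (big_and fs) = (\<Inter>f\<in>set fs. models f)"
  by (induction fs) auto
lemma models_big_or: "models (big_or fs) = (\<Union>f\<in>set fs. models f)"
  by (induction fs) auto

lemma mem_big_and_map: "v \<in> models (big_and (map g xs)) \<longleftrightarrow> (\<forall>p\<in>set xs. v \<in> models (g p))"
  by (induction xs) auto

lemma definable:
  fixes S :: "('p::finite) set set"
  shows "\<exists>f. models f = S"
proof -
  obtain ps :: "'p list" where ps: "set ps = UNIV" using finite_list[of "UNIV::'p set"] by auto
  define ch where "ch w = big_and (map (\<lambda>p. if p \<in> w then Atom p else Neg (Atom p)) ps)" for w :: "'p set"
  have ch: "models (ch w) = {w}" for w
  proof -
    have lit: "v \<in> models (if p \<in> w then Atom p else Neg (Atom p)) \<longleftrightarrow> (p \<in> v \<longleftrightarrow> p \<in> w)" for v p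
      by auto
    have "v \<in> models (ch w) \<longleftrightarrow> (\<forall>p \<in> set ps. p \<in> v \<longleftrightarrow> p \<in> w)" for v
      unfolding ch_def mem_big_and_map lit by (rule refl)
    then have "v \<in> models (ch w) \<longleftrightarrow> (\<forall>p. p \<in> v \<longleftrightarrow> p \<in> w)" for v using ps by simp
    then have "v \<in> models (ch w) \<longleftrightarrow> v = w" for v by (simp add: set_eq_iff)
    then show ?thesis by (simp add: set_eq_iff)
  qed
  have "finite S" by simp
  then obtain ws where ws: "set ws = S" using finite_list[of S] by auto
  have "models (big_or (map ch ws)) = (\<Union>w\<in>set ws. {w})" unfolding models_big_or using ch by simp
  then have "models (big_or (map ch ws)) = S" using ws by simp
  then show ?thesis by blast
qed

lemma realize:
  fixes B :: "'e \<Rightarrow> ('p::finite) form"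
  assumes "epistemic_space B" "S \<noteq> {}"
  shows "\<exists>E. models (B E) = S"
proof -
  obtain f where f: "models f = S" using definable by blast
  have "consistent f" using assms(2) f unfolding consistent_def entails_def by auto
  then obtain E where "B E \<equiv>\<^sub>P f" using assms(1) unfolding epistemic_space_def by blast
  then show ?thesis using f unfolding equivf_def by auto
qed

lemma maxs_cong: "r \<inter> C \<times> C = r' \<inter> C \<times> C \<Longrightarrow> maxs C r = maxs C r'"
  unfolding maxs_def by blast

lemma maxs_restr: "maxs C r = maxs C (r \<upharpoonleft> C)"
  unfolding maxs_def restr_def by blast

lemma restr_from_maxs:
  assumes "refl r" "refl r'" "maxs {w,w'} r = maxs {w,w'} r'"
  shows "r \<upharpoonleft> {w,w'} = r' \<upharpoonleft> {w,w'}"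
proof -
  have key: "(a,b) \<in> r \<longleftrightarrow> (a,b) \<in> r'" if "a \<in> {w,w'}" "b \<in> {w,w'}" for a b
  proof (cases "a = b")
    case True then show ?thesis using assms(1,2) by (auto simp: refl_on_def)
  next
    case False
    have "a \<in> maxs {w,w'} r \<longleftrightarrow> (a,b) \<in> r"
      using that False assms(1) unfolding maxs_def by (auto simp: refl_on_def)
    moreover have "a \<in> maxs {w,w'} r' \<longleftrightarrow> (a,b) \<in> r'"
      using that False assms(2) unfolding maxs_def by (auto simp: refl_on_def)
    ultimately show ?thesis using assms(3) by simp
  qed
  show ?thesis unfolding restr_def using key by auto
qed

lemma single_profile: "profile [j \<mapsto> e]"
  unfolding profile_def by simp

theorem mainTheorem11:
  fixes B :: "'e \<Rightarrow> ('p::finite) form"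
    and fus :: "('a::wellorder \<rightharpoonup> 'e) \<Rightarrow> 'e \<Rightarrow> 'e"
    and R :: "('a \<rightharpoonup> 'e) \<Rightarrow> 'p set rel"
  assumes "epistemic_space B"
    and "es_basic_fusion B fus"
    and "represents B fus R"
  defines "ESF_I \<equiv> (\<forall>\<Phi> \<Phi>' E. profile \<Phi> \<longrightarrow> dom \<Phi>' = dom \<Phi> \<longrightarrow>
              (\<forall>E'. B E' \<turnstile>\<^sub>P B E \<longrightarrow>
                 (\<forall>j \<in> dom \<Phi>. B (fus [j \<mapsto> the (\<Phi> j)] E') \<equiv>\<^sub>P B (fus [j \<mapsto> the (\<Phi>' j)] E'))) \<longrightarrow>
              B (fus \<Phi> E) \<equiv>\<^sub>P B (fus \<Phi>' E))"
    and "cond_ii \<equiv> (\<forall>\<Phi> \<Phi>' E. profile \<Phi> \<longrightarrow> dom \<Phi>' = dom \<Phi> \<longrightarrow> card (models (B E)) \<le> 2 \<longrightarrow>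
              (\<forall>j \<in> dom \<Phi>. B (fus [j \<mapsto> the (\<Phi> j)] E) \<equiv>\<^sub>P B (fus [j \<mapsto> the (\<Phi>' j)] E)) \<longrightarrow>
              B (fus \<Phi> E) \<equiv>\<^sub>P B (fus \<Phi>' E))"
    and "cond_iii \<equiv> (\<forall>\<Phi> \<Phi>' (w::'p set) w'. profile \<Phi> \<longrightarrow> dom \<Phi>' = dom \<Phi> \<longrightarrow>
              (\<forall>i \<in> dom \<Phi>. R [i \<mapsto> the (\<Phi> i)] \<upharpoonleft> {w, w'} = R [i \<mapsto> the (\<Phi>' i)] \<upharpoonleft> {w, w'}) \<longrightarrow>
              R \<Phi> \<upharpoonleft> {w, w'} = R \<Phi>' \<upharpoonleft> {w, w'})"
  shows "(ESF_I \<longleftrightarrow> cond_ii) \<and> (cond_ii \<longleftrightarrow> cond_iii)"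
proof -
  have TP: "\<And>\<Phi>. profile \<Phi> \<Longrightarrow> total_preorder (R \<Phi>)"
    and MX: "\<And>\<Phi> E. profile \<Phi> \<Longrightarrow> models (B (fus \<Phi> E)) = maxs (models (B E)) (R \<Phi>)"
    using assms(3) unfolding represents_def by blast+
  have RF: "\<And>\<Phi>. profile \<Phi> \<Longrightarrow> refl (R \<Phi>)" using TP unfolding total_preorder_def by blast
  have prof': "profile \<Phi>'" if "profile \<Phi>" "dom \<Phi>' = dom \<Phi>" for \<Phi> \<Phi>' :: "'a \<rightharpoonup> 'e"
    using that unfolding profile_def by simp
  have i_ii: "ESF_I \<Longrightarrow> cond_ii"
    unfolding cond_ii_def
  proof (intro allI impI)
    fix \<Phi> \<Phi>' E
    assume I: ESF_I and p: "profile \<Phi>" and d: "dom \<Phi>' = dom \<Phi>" and c: "card (models (B E)) \<le> 2"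
      and h: "\<forall>j \<in> dom \<Phi>. B (fus [j \<mapsto> the (\<Phi> j)] E) \<equiv>\<^sub>P B (fus [j \<mapsto> the (\<Phi>' j)] E)"
    have "\<forall>E'. B E' \<turnstile>\<^sub>P B E \<longrightarrow>
                 (\<forall>j \<in> dom \<Phi>. B (fus [j \<mapsto> the (\<Phi> j)] E') \<equiv>\<^sub>P B (fus [j \<mapsto> the (\<Phi>' j)] E'))"
    proof (intro allI impI ballI)
      fix E' j assume s: "B E' \<turnstile>\<^sub>P B E" and j: "j \<in> dom \<Phi>"
      have sub: "models (B E') \<subseteq> models (B E)" using s unfolding entails_def .
      have ne: "models (B E') \<noteq> {}" using assms(1) unfolding epistemic_space_def consistent_def entails_def by auto
      have fin: "finite (models (B E))" by simp
      show "B (fus [j \<mapsto> the (\<Phi> j)] E') \<equiv>\<^sub>P B (fus [j \<mapsto> the (\<Phi>' j)] E')"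
      proof (cases "models (B E') = models (B E)")
        case True
        have "models (B (fus [j \<mapsto> the (\<Phi> j)] E)) = models (B (fus [j \<mapsto> the (\<Phi>' j)] E))"
          using h j unfolding equivf_def by blast
        then show ?thesis using True unfolding equivf_def by (simp add: MX[OF single_profile])
      next
        case False
        then have "card (models (B E')) < card (models (B E))"
          using sub fin by (simp add: psubset_card_mono psubsetI)
        with c have "card (models (B E')) \<le> 1" by simp
        moreover have "card (models (B E')) \<noteq> 0" using ne fin sub finite_subset by auto
        ultimately obtain w where w: "models (B E') = {w}" using card_1_singletonE
          by (metis One_nat_def le_Suc_eq le_zero_eq)
        have "maxs {w} (R [j \<mapsto> e]) = {w}" for e
          using RF[OF single_profile] unfolding maxs_def by (auto simp: refl_on_def)
        then show ?thesis using w unfolding equivf_def by (simp add: MX[OF single_profile])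
      qed
    qed
    then show "B (fus \<Phi> E) \<equiv>\<^sub>P B (fus \<Phi>' E)" using I p d unfolding ESF_I_def by blast
  qed
  have ii_iii: "cond_ii \<Longrightarrow> cond_iii"
    unfolding cond_iii_def
  proof (intro allI impI)
    fix \<Phi> \<Phi>' w w'
    assume II: cond_ii and p: "profile \<Phi>" and d: "dom \<Phi>' = dom \<Phi>"
      and h: "\<forall>i \<in> dom \<Phi>. R [i \<mapsto> the (\<Phi> i)] \<upharpoonleft> {w, w'} = R [i \<mapsto> the (\<Phi>' i)] \<upharpoonleft> {w, w'}"
    obtain E where E: "models (B E) = {w,w'}" using realize[OF assms(1), of "{w,w'}"] by auto
    have c: "card (models (B E)) \<le> 2" using E by (simp add: card_insert_if)
    have "\<forall>j \<in> dom \<Phi>. B (fus [j \<mapsto> the (\<Phi> j)] E) \<equiv>\<^sub>P B (fus [j \<mapsto> the (\<Phi>' j)] E)"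
    proof
      fix j assume j: "j \<in> dom \<Phi>"
      have "maxs {w,w'} (R [j \<mapsto> the (\<Phi> j)]) = maxs {w,w'} (R [j \<mapsto> the (\<Phi> j)] \<upharpoonleft> {w,w'})"
        by (rule maxs_restr)
      also have "\<dots> = maxs {w,w'} (R [j \<mapsto> the (\<Phi>' j)] \<upharpoonleft> {w,w'})"
        using h j by simp
      also have "\<dots> = maxs {w,w'} (R [j \<mapsto> the (\<Phi>' j)])"
        by (rule maxs_restr[symmetric])
      finally have "maxs {w,w'} (R [j \<mapsto> the (\<Phi> j)]) = maxs {w,w'} (R [j \<mapsto> the (\<Phi>' j)])" .
      then show "B (fus [j \<mapsto> the (\<Phi> j)] E) \<equiv>\<^sub>P B (fus [j \<mapsto> the (\<Phi>' j)] E)"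
        using E unfolding equivf_def by (simp add: MX[OF single_profile])
    qed
    then have "B (fus \<Phi> E) \<equiv>\<^sub>P B (fus \<Phi>' E)" using II p d c unfolding cond_ii_def by blast
    then have "maxs {w,w'} (R \<Phi>) = maxs {w,w'} (R \<Phi>')"
      using E unfolding equivf_def by (simp add: MX[OF p] MX[OF prof'[OF p d]])
    then show "R \<Phi> \<upharpoonleft> {w, w'} = R \<Phi>' \<upharpoonleft> {w, w'}"
      by (rule restr_from_maxs[OF RF[OF p] RF[OF prof'[OF p d]]])
  qed
  have iii_i: "cond_iii \<Longrightarrow> ESF_I"
    unfolding ESF_I_def
  proof (intro allI impI)
    fix \<Phi> \<Phi>' E
    assume III: cond_iii and p: "profile \<Phi>" and d: "dom \<Phi>' = dom \<Phi>"
      and h: "\<forall>E'. B E' \<turnstile>\<^sub>P B E \<longrightarrow>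
                 (\<forall>j \<in> dom \<Phi>. B (fus [j \<mapsto> the (\<Phi> j)] E') \<equiv>\<^sub>P B (fus [j \<mapsto> the (\<Phi>' j)] E'))"
    have pair: "R \<Phi> \<upharpoonleft> {w, w'} = R \<Phi>' \<upharpoonleft> {w, w'}"
      if w: "w \<in> models (B E)" "w' \<in> models (B E)" for w w'
    proof -
      obtain E' where E': "models (B E') = {w,w'}" using realize[OF assms(1), of "{w,w'}"] by auto
      have "B E' \<turnstile>\<^sub>P B E" using E' w unfolding entails_def by auto
      then have "\<forall>j \<in> dom \<Phi>. B (fus [j \<mapsto> the (\<Phi> j)] E') \<equiv>\<^sub>P B (fus [j \<mapsto> the (\<Phi>' j)] E')"
        using h by blast
      then have "\<forall>i \<in> dom \<Phi>. R [i \<mapsto> the (\<Phi> i)] \<upharpoonleft> {w, w'} = R [i \<mapsto> the (\<Phi>' i)] \<upharpoonleft> {w, w'}"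
      proof (intro ballI)
        fix i assume "\<forall>j \<in> dom \<Phi>. B (fus [j \<mapsto> the (\<Phi> j)] E') \<equiv>\<^sub>P B (fus [j \<mapsto> the (\<Phi>' j)] E')" "i \<in> dom \<Phi>"
        then have "maxs {w,w'} (R [i \<mapsto> the (\<Phi> i)]) = maxs {w,w'} (R [i \<mapsto> the (\<Phi>' i)])"
          using E' unfolding equivf_def by (simp add: MX[OF single_profile])
        then show "R [i \<mapsto> the (\<Phi> i)] \<upharpoonleft> {w, w'} = R [i \<mapsto> the (\<Phi>' i)] \<upharpoonleft> {w, w'}"
          by (rule restr_from_maxs[OF RF[OF single_profile] RF[OF single_profile]])
      qed
      then show ?thesis using III p d unfolding cond_iii_def by blast
    qed
    have "R \<Phi> \<inter> models (B E) \<times> models (B E) = R \<Phi>' \<inter> models (B E) \<times> models (B E)"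
    proof (intro set_eqI iffI)
      fix x assume "x \<in> R \<Phi> \<inter> models (B E) \<times> models (B E)"
      then obtain a b where x: "x = (a,b)" "a \<in> models (B E)" "b \<in> models (B E)" "(a,b) \<in> R \<Phi>" by auto
      then show "x \<in> R \<Phi>' \<inter> models (B E) \<times> models (B E)"
        using pair[OF x(2,3)] unfolding restr_def by blast
    next
      fix x assume "x \<in> R \<Phi>' \<inter> models (B E) \<times> models (B E)"
      then obtain a b where x: "x = (a,b)" "a \<in> models (B E)" "b \<in> models (B E)" "(a,b) \<in> R \<Phi>'" by auto
      then show "x \<in> R \<Phi> \<inter> models (B E) \<times> models (B E)"
        using pair[OF x(2,3)] unfolding restr_def by blast
    qed
    then have "maxs (models (B E)) (R \<Phi>) = maxs (models (B E)) (R \<Phi>')" by (rule maxs_cong)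
    then show "B (fus \<Phi> E) \<equiv>\<^sub>P B (fus \<Phi>' E)"
      unfolding equivf_def MX[OF p] MX[OF prof'[OF p d]] .
  qed
  show ?thesis
  proof (intro conjI iffI)
    assume ESF_I then show cond_ii by (rule i_ii)
  next
    assume cond_ii then show ESF_I by (rule iii_i[OF ii_iii])
  next
    assume cond_ii then show cond_iii by (rule ii_iii)
  next
    assume cond_iii then show cond_ii by (rule i_ii[OF iii_i])
  qed
qed

end
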